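(* Let $P\subseteq\{3,4,\ldots,\omega\}$, let $\overline{u}=(F_i)_{i<\omega}$ with arrows $f^m_n\in\ddagger\mathcal{F}_P(F_m,F_n)$ be a Fraïssé sequence for the category $\ddagger\mathcal{F}_P$, and let $(\mathbb{F},E)$ be its limit. Then $E\subseteq\mathrm{End}(\mathbb{F})$ and $E$ is dense in $\mathbb{F}$.
   Context: Graphs have reflexive symmetric edge relations; finite graphs are discrete. An epimorphism $f\colon B\to A$ is a surjection with $\langle a_1,a_2\rangle$ an edge iff some $b_i\in f^{-1}(a_i)$ form an edge; monotone if fibres induce connected subgraphs. In a finite tree, $\mathrm{ord}(a)$ is the number of neighbours other than $a$; endpoints have order $\le1$, ramification points order $\ge3$; $\mathrm{End}(A)$ is the set of endpoints. For monotone $f\colon B\to A$ of finite trees and $a$ with $\mathrm{ord}(a)=n\ge3$, $a$ is a point of weak coherence witnessed by $b$ if $b\in f^{-1}(a)$, $\mathrm{ord}(b)=m\ge n$, and an injection $p\colon n\to m$ satisfies $f^{-1}(A_i)\subseteq B_{p(i)}$ ($A_i$, $B_j$ the components of $A\setminus\{a\}$, $B\setminus\{b\}$); weakly coherent if this holds at all ramification points. Category $\ddagger\mathcal{F}_P$: objects are finite trees with at least one ramification point, every vertex an endpoint or ramification point, each ramification point $a$ carrying exactly one label $p\in P$ with $\mathrm{ord}(a)\le p$, endpoints unlabeled; arrows $f\in\ddagger\mathcal{F}_P(B,A)$ are pairs $(p(f),e(f))$ with $p(f)\colon B\to A$ a weakly coherent monotone epimorphism such that witnesses of weak coherence at vertices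 labeled $p$ are labeled $p$, and $e(f)\colon\mathrm{End}(A)\to\mathrm{End}(B)$ with $p(f)\circ e(f)=\mathrm{Id}$; composition $f\circ g=(p(f)\circ p(g),e(g)\circ e(f))$. A Fraïssé sequence: (1) every object $x$ admits an arrow $F_n\to x$ for some $n$; (2) for every arrow $f\colon y\to F_n$ there are $m\ge n$ and $g\colon F_m\to y$ with $f\circ g=f^m_n$. The limit $(\mathbb{F},E)$: $\mathbb{F}\subseteq\prod F_i$ is the inverse limit of the maps $p(f^m_n)$ as topological graphs (product topology, coordinatewise edges), and $E\subseteq\mathbb{F}$ is the direct limit of the embedding parts, i.e. the set of points $x\in\mathbb{F}$ for which there are $m$ and $y\in\mathrm{End}(F_m)$ with $x_k=e(f^k_m)(y)$ for all $k\ge m$. Endpoints of the topological graph $\mathbb{F}$: a topological graph is connected if its vertex set cannot be split into two nonempty disjoint closed sets with no edges between them; an arc is a connected topological graph whose removal of any vertex other than at most two (its endpoints) disconnects it; $x\in\mathbb{F}$ is an endpoint if for every arc $H$ and every embedding (edge-preserving and reflecting homeomorphism onto image) $H\to\mathbb{F}$ with $x$ in the image, $x$ is the image of an endpoint of $H$. *)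

theory Defs
  imports "HOL-Analysis.Analysis" "HOL-Library.Extended_Nat"
begin

text \<open>Vertices are natural numbers. Labels: None = unlabeled, Some p with p an extended
natural (\<infinity> plays the role of \<omega>).\<close>

record tobj =
  V   :: "nat set"
  Ed  :: "nat \<Rightarrow> nat \<Rightarrow> bool"
  lab :: "nat \<Rightarrow> enat option"

definition fgraph :: "tobj \<Rightarrow> bool" where
  "fgraph A \<longleftrightarrow> finite (V A) \<and> (\<forall>x y. Ed A x y \<longrightarrow> x \<in> V A \<and> y \<in> V A)
     \<and> (\<forall>x\<in>V A. Ed A x x) \<and> (\<forall>x y. Ed A x y \<longrightarrow> Ed A y x)"

definition conn_on :: "('a \<Rightarrow> 'a \<Rightarrow> bool) \<Rightarrow> 'a set \<Rightarrow> bool" where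
  "conn_on E S \<longleftrightarrow> \<not> (\<exists>X Y. X \<noteq> {} \<and> Y \<noteq> {} \<and> X \<inter> Y = {} \<and> X \<union> Y = S
        \<and> (\<forall>x\<in>X. \<forall>y\<in>Y. \<not> E x y))"

definition components :: "('a \<Rightarrow> 'a \<Rightarrow> bool) \<Rightarrow> 'a set \<Rightarrow> 'a set set" where
  "components E S = {C. C \<subseteq> S \<and> C \<noteq> {} \<and> conn_on E C \<and>
        (\<forall>D. C \<subseteq> D \<and> D \<subseteq> S \<and> conn_on E D \<longrightarrow> D = C)}"

definition has_cycle :: "tobj \<Rightarrow> bool" where
  "has_cycle A \<longleftrightarrow> (\<exists>xs. distinct xs \<and> length xs \<ge> 3 \<and> set xs \<subseteq> V A
       \<and> (\<forall>i. i + 1 < length xs \<longrightarrow> Ed A (xs ! i) (xs ! (i + 1)))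
       \<and> Ed A (last xs) (hd xs))"

definition ftree :: "tobj \<Rightarrow> bool" where
  "ftree A \<longleftrightarrow> fgraph A \<and> V A \<noteq> {} \<and> conn_on (Ed A) (V A) \<and> \<not> has_cycle A"

definition ord :: "tobj \<Rightarrow> nat \<Rightarrow> nat" where
  "ord A a = card {b \<in> V A. b \<noteq> a \<and> Ed A a b}"

definition Ends :: "tobj \<Rightarrow> nat set" where
  "Ends A = {a \<in> V A. ord A a \<le> 1}"

definition ram :: "tobj \<Rightarrow> nat set" where
  "ram A = {a \<in> V A. ord A a \<ge> 3}"

definition comps_minus :: "tobj \<Rightarrow> nat \<Rightarrow> nat set set" where
  "comps_minus A a = components (Ed A) (V A - {a})"

definition obj :: "enat set \<Rightarrow> tobj \<Rightarrow> bool" where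
  "obj P A \<longleftrightarrow> ftree A \<and> ram A \<noteq> {} \<and> (\<forall>a\<in>V A. a \<in> Ends A \<or> a \<in> ram A)
     \<and> (\<forall>a\<in>ram A. \<exists>p\<in>P. lab A a = Some p \<and> enat (ord A a) \<le> p)
     \<and> (\<forall>a\<in>Ends A. lab A a = None)"

definition epi :: "tobj \<Rightarrow> tobj \<Rightarrow> (nat \<Rightarrow> nat) \<Rightarrow> bool" where
  "epi B A f \<longleftrightarrow> (\<forall>b\<in>V B. f b \<in> V A) \<and> f ` V B = V A \<and>
     (\<forall>a1\<in>V A. \<forall>a2\<in>V A. Ed A a1 a2 \<longleftrightarrow>
        (\<exists>b1\<in>V B. \<exists>b2\<in>V B. f b1 = a1 \<and> f b2 = a2 \<and> Ed B b1 b2))"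

definition monotone_map :: "tobj \<Rightarrow> tobj \<Rightarrow> (nat \<Rightarrow> nat) \<Rightarrow> bool" where
  "monotone_map B A f \<longleftrightarrow> (\<forall>a\<in>V A. conn_on (Ed B) {b \<in> V B. f b = a})"

text \<open>b witnesses weak coherence of f at a: the injection p : n \<rightarrow> m between index sets of
components is represented as an injection between the sets of components.\<close>
definition wc_witness :: "tobj \<Rightarrow> tobj \<Rightarrow> (nat \<Rightarrow> nat) \<Rightarrow> nat \<Rightarrow> nat \<Rightarrow> bool" where
  "wc_witness B A f a b \<longleftrightarrow> b \<in> V B \<and> f b = a \<and> ord B b \<ge> ord A a \<and>
     (\<exists>\<pi>. inj_on \<pi> (comps_minus A a) \<and>
        (\<forall>C\<in>comps_minus A a. \<pi> C \<in> comps_minus B b \<and> {x \<in> V B. f x \<in> C} \<subseteq> \<pi> C))"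

definition weakly_coherent :: "tobj \<Rightarrow> tobj \<Rightarrow> (nat \<Rightarrow> nat) \<Rightarrow> bool" where
  "weakly_coherent B A f \<longleftrightarrow> (\<forall>a\<in>ram A. \<exists>b. wc_witness B A f a b)"

type_synonym arr = "(nat \<Rightarrow> nat) \<times> (nat \<Rightarrow> nat)"

definition arrow :: "enat set \<Rightarrow> tobj \<Rightarrow> tobj \<Rightarrow> arr \<Rightarrow> bool" where
  "arrow P B A f \<longleftrightarrow> obj P B \<and> obj P A \<and>
     epi B A (fst f) \<and> monotone_map B A (fst f) \<and> weakly_coherent B A (fst f) \<and>
     (\<forall>a\<in>ram A. \<forall>b. wc_witness B A (fst f) a b \<longrightarrow> lab B b = lab A a) \<and>
     (\<forall>y\<in>Ends A. snd f y \<in> Ends B \<and> fst f (snd f y) = y)"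

text \<open>Equality of arrows B \<rightarrow> A (functions compared on their domains).\<close>
definition arr_eq :: "tobj \<Rightarrow> tobj \<Rightarrow> arr \<Rightarrow> arr \<Rightarrow> bool" where
  "arr_eq B A f g \<longleftrightarrow> (\<forall>x\<in>V B. fst f x = fst g x) \<and> (\<forall>y\<in>Ends A. snd f y = snd g y)"

definition comp_arr :: "arr \<Rightarrow> arr \<Rightarrow> arr" where
  "comp_arr f g = (fst f \<circ> fst g, snd g \<circ> snd f)"

text \<open>f m n is the arrow f^m_n : F m \<rightarrow> F n (for n \<le> m).\<close>
definition fraisse_seq :: "enat set \<Rightarrow> (nat \<Rightarrow> tobj) \<Rightarrow> (nat \<Rightarrow> nat \<Rightarrow> arr) \<Rightarrow> bool" where
  "fraisse_seq P F f \<longleftrightarrow>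
     (\<forall>n. obj P (F n)) \<and>
     (\<forall>n m. n \<le> m \<longrightarrow> arrow P (F m) (F n) (f m n)) \<and>
     (\<forall>n. arr_eq (F n) (F n) (f n n) (id, id)) \<and>
     (\<forall>n m k. n \<le> m \<longrightarrow> m \<le> k \<longrightarrow> arr_eq (F k) (F n) (comp_arr (f m n) (f k m)) (f k n)) \<and>
     (\<forall>x. obj P x \<longrightarrow> (\<exists>n g. arrow P (F n) x g)) \<and>
     (\<forall>n y g. arrow P y (F n) g \<longrightarrow>
        (\<exists>m\<ge>n. \<exists>h. arrow P (F m) y h \<and> arr_eq (F m) (F n) (comp_arr g h) (f m n)))"

definition limF :: "(nat \<Rightarrow> tobj) \<Rightarrow> (nat \<Rightarrow> nat \<Rightarrow> arr) \<Rightarrow> (nat \<Rightarrow> nat) set" where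
  "limF F f = {x. (\<forall>i. x i \<in> V (F i)) \<and> (\<forall>n m. n \<le> m \<longrightarrow> fst (f m n) (x m) = x n)}"

definition limE :: "(nat \<Rightarrow> tobj) \<Rightarrow> (nat \<Rightarrow> nat \<Rightarrow> arr) \<Rightarrow> (nat \<Rightarrow> nat) set" where
  "limE F f = {x \<in> limF F f. \<exists>m. \<exists>y\<in>Ends (F m). \<forall>k\<ge>m. x k = snd (f k m) y}"

definition limT :: "(nat \<Rightarrow> tobj) \<Rightarrow> (nat \<Rightarrow> nat \<Rightarrow> arr) \<Rightarrow> (nat \<Rightarrow> nat) topology" where
  "limT F f = subtopology (product_topology (\<lambda>i. discrete_topology (V (F i))) UNIV) (limF F f)"

definition limEd :: "(nat \<Rightarrow> tobj) \<Rightarrow> (nat \<Rightarrow> nat) \<Rightarrow> (nat \<Rightarrow> nat) \<Rightarrow> bool" where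
  "limEd F x y \<longleftrightarrow> (\<forall>i. Ed (F i) (x i) (y i))"

definition tg_graph :: "'a topology \<Rightarrow> ('a \<Rightarrow> 'a \<Rightarrow> bool) \<Rightarrow> bool" where
  "tg_graph T E \<longleftrightarrow> (\<forall>x\<in>topspace T. E x x) \<and>
     (\<forall>x\<in>topspace T. \<forall>y\<in>topspace T. E x y \<longrightarrow> E y x)"

definition tg_connected :: "'a topology \<Rightarrow> ('a \<Rightarrow> 'a \<Rightarrow> bool) \<Rightarrow> bool" where
  "tg_connected T E \<longleftrightarrow> \<not> (\<exists>X Y. closedin T X \<and> closedin T Y \<and> X \<noteq> {} \<and> Y \<noteq> {} \<and>
      X \<inter> Y = {} \<and> X \<union> Y = topspace T \<and> (\<forall>x\<in>X. \<forall>y\<in>Y. \<not> E x y))"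

definition arc_ends :: "'a topology \<Rightarrow> ('a \<Rightarrow> 'a \<Rightarrow> bool) \<Rightarrow> 'a set" where
  "arc_ends T E = {v \<in> topspace T. tg_connected (subtopology T (topspace T - {v})) E}"

definition is_arc :: "'a topology \<Rightarrow> ('a \<Rightarrow> 'a \<Rightarrow> bool) \<Rightarrow> bool" where
  "is_arc T E \<longleftrightarrow> tg_graph T E \<and> tg_connected T E \<and> finite (arc_ends T E) \<and> card (arc_ends T E) \<le> 2"

text \<open>Endpoint of a topological graph, tested against all arcs whose carrier lives in type 'h.
Stated with a free type variable 'h in a theorem, this means: for arcs of every type.\<close>
definition tg_endpoint :: "'h itself \<Rightarrow> 'a topology \<Rightarrow> ('a \<Rightarrow> 'a \<Rightarrow> bool) \<Rightarrow> 'a \<Rightarrow> bool" where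
  "tg_endpoint _ X EG x \<longleftrightarrow> x \<in> topspace X \<and>
     (\<forall>(T::'h topology) EH h. is_arc T EH \<and> embedding_map T X h \<and>
        (\<forall>u\<in>topspace T. \<forall>v\<in>topspace T. EH u v \<longleftrightarrow> EG (h u) (h v)) \<and>
        x \<in> h ` topspace T \<longrightarrow> x \<in> h ` arc_ends T EH)"

end

theory Submission imports Defs begin

fun walk :: "('a \<Rightarrow> 'a \<Rightarrow> bool) \<Rightarrow> 'a list \<Rightarrow> bool" where
  "walk E [] = True" | "walk E [x] = True" | "walk E (x # y # xs) = (E x y \<and> walk E (y # xs))"

lemma walk_nth: "walk E xs \<longleftrightarrow> (\<forall>i. i + 1 < length xs \<longrightarrow> E (xs ! i) (xs ! (i + 1)))"
proof (induction E xs rule: walk.induct)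
  case (3 E x y xs)
  show ?case
  proof
    assume "walk E (x # y # xs)"
    then show "\<forall>i. i + 1 < length (x # y # xs) \<longrightarrow> E ((x # y # xs) ! i) ((x # y # xs) ! (i + 1))"
      using 3 by (auto simp: nth_Cons split: nat.splits)
  next
    assume H: "\<forall>i. i + 1 < length (x # y # xs) \<longrightarrow> E ((x # y # xs) ! i) ((x # y # xs) ! (i + 1))"
    have "E x y" using H[rule_format, of 0] by simp
    moreover have "walk E (y # xs)" unfolding 3
    proof (intro allI impI)
      fix i assume "i + 1 < length (y # xs)"
      then show "E ((y # xs) ! i) ((y # xs) ! (i + 1))" using H[rule_format, of "Suc i"] by simp
    qed
    ultimately show "walk E (x # y # xs)" by simp
  qed
qed auto

lemma walk_Cons: "walk E (x # xs) \<longleftrightarrow> (xs = [] \<or> (E x (hd xs) \<and> walk E xs))"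
  by (cases xs) auto

lemma walk_append: "walk E (xs @ ys) \<longleftrightarrow> walk E xs \<and> walk E ys \<and> (xs \<noteq> [] \<and> ys \<noteq> [] \<longrightarrow> E (last xs) (hd ys))"
  by (induction xs) (auto simp: walk_Cons)

lemma walk_mono: "walk E xs \<Longrightarrow> (\<And>u v. u \<in> set xs \<Longrightarrow> v \<in> set xs \<Longrightarrow> E u v \<Longrightarrow> E' u v) \<Longrightarrow> walk E' xs"
  by (induction E xs rule: walk.induct) auto

lemma walk_distinct:
  assumes "walk E xs" "xs \<noteq> []"
  shows "\<exists>ys. walk E ys \<and> distinct ys \<and> ys \<noteq> [] \<and> hd ys = hd xs \<and> last ys = last xs \<and> set ys \<subseteq> set xs"
  using assms
proof (induction xs)
  case Nil then show ?case by simp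
next
  case (Cons x xs)
  show ?case
  proof (cases "xs = []")
    case True then show ?thesis by (intro exI[of _ "[x]"]) auto
  next
    case False
    then have "walk E xs" "E x (hd xs)" using Cons.prems by (auto simp: walk_Cons)
    then obtain ys where ys: "walk E ys" "distinct ys" "ys \<noteq> []" "hd ys = hd xs" "last ys = last xs" "set ys \<subseteq> set xs"
      using Cons.IH False by blast
    show ?thesis
    proof (cases "x \<in> set ys")
      case False
      then show ?thesis using ys \<open>E x (hd xs)\<close> \<open>xs \<noteq> []\<close>
        by (intro exI[of _ "x # ys"]) (auto simp: walk_Cons)
    next
      case True
      then obtain us vs where uv: "ys = us @ x # vs" by (meson split_list)
      have "walk E (x # vs)" using ys(1) uv by (simp add: walk_append)
      moreover have "distinct (x # vs)" using ys(2) uv by simp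
      moreover have "last (x # vs) = last (x # xs)" using ys(5) uv \<open>xs \<noteq> []\<close> by simp
      moreover have "set (x # vs) \<subseteq> set (x # xs)" using ys(6) uv by auto
      ultimately show ?thesis by (intro exI[of _ "x # vs"]) auto
    qed
  qed
qed

lemma conn_walk:
  assumes "conn_on E S" "a \<in> S" "b \<in> S"
  shows "\<exists>ps. walk E ps \<and> distinct ps \<and> ps \<noteq> [] \<and> hd ps = a \<and> last ps = b \<and> set ps \<subseteq> S"
proof -
  define R where "R = {v \<in> S. \<exists>ps. walk E ps \<and> ps \<noteq> [] \<and> hd ps = a \<and> last ps = v \<and> set ps \<subseteq> S}"
  have aR: "a \<in> R" unfolding R_def using assms(2) by (intro CollectI conjI exI[of _ "[a]"]) auto
  have noedge: "\<forall>x\<in>R. \<forall>y\<in>S - R. \<not> E x y"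
  proof (intro ballI notI)
    fix x y assume "x \<in> R" "y \<in> S - R" "E x y"
    then obtain ps where ps: "walk E ps" "ps \<noteq> []" "hd ps = a" "last ps = x" "set ps \<subseteq> S"
      unfolding R_def by blast
    have "walk E (ps @ [y])" using ps \<open>E x y\<close> by (simp add: walk_append)
    then have "y \<in> R" unfolding R_def using ps \<open>y \<in> S - R\<close> by (intro CollectI conjI exI[of _ "ps @ [y]"]) auto
    then show False using \<open>y \<in> S - R\<close> by blast
  qed
  have "R \<subseteq> S" unfolding R_def by blast
  then have "S - R = {}" using assms(1) aR noedge unfolding conn_on_def
    by (metis Diff_disjoint Diff_partition empty_iff)
  then have "b \<in> R" using assms(3) by blast
  then obtain ps where ps: "walk E ps" "ps \<noteq> []" "hd ps = a" "last ps = b" "set ps \<subseteq> S"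
    unfolding R_def by blast
  then show ?thesis using walk_distinct[OF ps(1,2)] by (metis order_trans)
qed

lemma has_cycle_walk: "has_cycle A \<longleftrightarrow> (\<exists>xs. distinct xs \<and> 3 \<le> length xs \<and> set xs \<subseteq> V A
       \<and> walk (Ed A) xs \<and> Ed A (last xs) (hd xs))"
  unfolding has_cycle_def walk_nth by auto

lemma tree_uniq:
  assumes "ftree B" "Z \<subseteq> V B" "W \<subseteq> V B" "Z \<inter> W = {}" "conn_on (Ed B) Z" "conn_on (Ed B) W"
    "z \<in> Z" "z' \<in> Z" "w \<in> W" "w' \<in> W" "Ed B w z" "Ed B w' z'"
  shows "w = w'"
proof (rule ccontr)
  assume ne: "w \<noteq> w'"
  obtain pZ where pZ: "walk (Ed B) pZ" "distinct pZ" "pZ \<noteq> []" "hd pZ = z" "last pZ = z'" "set pZ \<subseteq> Z"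
    using conn_walk[OF assms(5,7,8)] by blast
  obtain pW where pW: "walk (Ed B) pW" "distinct pW" "pW \<noteq> []" "hd pW = w'" "last pW = w" "set pW \<subseteq> W"
    using conn_walk[OF assms(6,10,9)] by blast
  have sym: "\<And>x y. Ed B x y \<Longrightarrow> Ed B y x" using assms(1) unfolding ftree_def fgraph_def by blast
  have "length pW \<noteq> 1" using pW ne by (cases pW) auto
  moreover have "0 < length pW" using pW(3) by simp
  ultimately have "length pW \<ge> 2" by linarith
  moreover have "length pZ \<ge> 1" using pZ(3) by (simp add: Suc_le_eq)
  ultimately have len: "3 \<le> length (pZ @ pW)" by simp
  have "walk (Ed B) (pZ @ pW)" using pZ pW sym assms(12) by (simp add: walk_append)
  moreover have "distinct (pZ @ pW)" using pZ pW assms(4) by auto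
  moreover have "set (pZ @ pW) \<subseteq> V B" using pZ pW assms(2,3) by auto
  moreover have "Ed B (last (pZ @ pW)) (hd (pZ @ pW))" using pZ pW assms(11) by simp
  ultimately have "has_cycle B" unfolding has_cycle_walk using len by blast
  then show False using assms(1) unfolding ftree_def by blast
qed

lemma fs_obj: "fraisse_seq P F f \<Longrightarrow> obj P (F n)"
  unfolding fraisse_seq_def by blast

lemma fs_arrow: "fraisse_seq P F f \<Longrightarrow> n \<le> m \<Longrightarrow> arrow P (F m) (F n) (f m n)"
  unfolding fraisse_seq_def by blast

lemma fs_id_fst: "fraisse_seq P F f \<Longrightarrow> u \<in> V (F n) \<Longrightarrow> fst (f n n) u = u"
  unfolding fraisse_seq_def arr_eq_def by auto

lemma fs_id_snd: "fraisse_seq P F f \<Longrightarrow> u \<in> Ends (F n) \<Longrightarrow> snd (f n n) u = u"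
  unfolding fraisse_seq_def arr_eq_def by auto

lemma fs_comp_fst: "fraisse_seq P F f \<Longrightarrow> n \<le> m \<Longrightarrow> m \<le> k \<Longrightarrow> u \<in> V (F k)
   \<Longrightarrow> fst (f m n) (fst (f k m) u) = fst (f k n) u"
  unfolding fraisse_seq_def arr_eq_def comp_arr_def by auto

lemma fs_comp_snd: "fraisse_seq P F f \<Longrightarrow> n \<le> m \<Longrightarrow> m \<le> k \<Longrightarrow> y \<in> Ends (F n)
   \<Longrightarrow> snd (f k m) (snd (f m n) y) = snd (f k n) y"
  unfolding fraisse_seq_def arr_eq_def comp_arr_def by auto

lemma arrow_fst_V: "arrow P B A g \<Longrightarrow> u \<in> V B \<Longrightarrow> fst g u \<in> V A"
  unfolding arrow_def epi_def by blast

lemma arrow_snd_Ends: "arrow P B A g \<Longrightarrow> y \<in> Ends A \<Longrightarrow> snd g y \<in> Ends B \<and> fst g (snd g y) = y"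
  unfolding arrow_def by blast

lemma Ends_V: "y \<in> Ends A \<Longrightarrow> y \<in> V A"
  unfolding Ends_def by blast

lemma obj_fgraph: "obj P A \<Longrightarrow> fgraph A"
  unfolding obj_def ftree_def by blast

lemma limF_down: "x \<in> limF F f \<Longrightarrow> n \<le> m \<Longrightarrow> fst (f m n) (x m) = x n"
  unfolding limF_def by blast

lemma limF_V: "x \<in> limF F f \<Longrightarrow> x i \<in> V (F i)"
  unfolding limF_def by blast

lemma limF_eq_below: "x \<in> limF F f \<Longrightarrow> y \<in> limF F f \<Longrightarrow> j \<le> K \<Longrightarrow> x K = y K \<Longrightarrow> x j = y j"
  by (metis limF_down)

lemma limF_neq: "x \<in> limF F f \<Longrightarrow> y \<in> limF F f \<Longrightarrow> x \<noteq> y \<Longrightarrow> \<exists>j. \<forall>K\<ge>j. x K \<noteq> y K"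
  by (metis ext limF_eq_below)

lemma limE_Ends:
  assumes "fraisse_seq P F f" "x \<in> limE F f"
  shows "\<exists>m. \<forall>K\<ge>m. x K \<in> Ends (F K)"
proof -
  obtain m y where "y \<in> Ends (F m)" "\<forall>k\<ge>m. x k = snd (f k m) y"
    using assms(2) unfolding limE_def by blast
  then show ?thesis using arrow_snd_Ends[OF fs_arrow[OF assms(1)]] by metis
qed

lemma uniq_nb:
  assumes fs: "fraisse_seq P F f" and x: "x \<in> limF F f" "x K \<in> Ends (F K)"
    and lim: "z \<in> limF F f" "z' \<in> limF F f" "w \<in> limF F f" "w' \<in> limF F f"
    and zK: "z K = x K" "z' K = x K" and wK: "w K \<noteq> x K" "w' K \<noteq> x K"
    and ed: "limEd F w z" "limEd F w' z'"
  shows "w = w'"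
proof -
  have fgK: "fgraph (F K)" using obj_fgraph[OF fs_obj[OF fs]] .
  have "Ed (F K) (x K) (w K)" "Ed (F K) (x K) (w' K)"
    using ed zK fgK unfolding limEd_def fgraph_def by metis+
  then have "w K \<in> {b \<in> V (F K). b \<noteq> x K \<and> Ed (F K) (x K) b}"
    "w' K \<in> {b \<in> V (F K). b \<noteq> x K \<and> Ed (F K) (x K) b}"
    using wK limF_V[OF lim(3)] limF_V[OF lim(4)] by auto
  moreover have "card {b \<in> V (F K). b \<noteq> x K \<and> Ed (F K) (x K) b} \<le> Suc 0"
    using x(2) unfolding Ends_def ord_def by simp
  moreover have "finite {b \<in> V (F K). b \<noteq> x K \<and> Ed (F K) (x K) b}"
    using fgK unfolding fgraph_def by simp
  ultimately have wKeq: "w K = w' K" using card_le_Suc0_iff_eq by blast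
  have "w k = w' k" for k
  proof (cases "K \<le> k")
    case True
    have ar: "arrow P (F k) (F K) (f k K)" using fs_arrow[OF fs True] .
    let ?g = "fst (f k K)"
    define Z where "Z = {b \<in> V (F k). ?g b = x K}"
    define W where "W = {b \<in> V (F k). ?g b = w K}"
    have mono: "monotone_map (F k) (F K) ?g" using ar unfolding arrow_def by blast
    have "conn_on (Ed (F k)) Z" "conn_on (Ed (F k)) W"
      using mono limF_V[OF x(1)] limF_V[OF lim(3)] unfolding monotone_map_def Z_def W_def by auto
    moreover have "ftree (F k)" using fs_obj[OF fs] unfolding obj_def by blast
    moreover have "Z \<inter> W = {}" using wK unfolding Z_def W_def by auto
    moreover have "z k \<in> Z" "z' k \<in> Z" "w k \<in> W" "w' k \<in> W"
      using limF_V[OF lim(1)] limF_V[OF lim(2)] limF_V[OF lim(3)] limF_V[OF lim(4)]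
        limF_down[OF lim(1) True] limF_down[OF lim(2) True] limF_down[OF lim(3) True]
        limF_down[OF lim(4) True] zK wKeq unfolding Z_def W_def by auto
    moreover have "Ed (F k) (w k) (z k)" "Ed (F k) (w' k) (z' k)" using ed unfolding limEd_def by auto
    ultimately show ?thesis using tree_uniq[of "F k" Z W] unfolding Z_def W_def by blast
  next
    case False
    then show ?thesis using limF_eq_below[OF lim(3) lim(4) _ wKeq] by simp
  qed
  then show ?thesis by blast
qed

section \<open>Topology of the limit\<close>

lemma topspace_limT: "topspace (limT F f) = limF F f"
  unfolding limT_def by (auto simp: limF_def PiE_iff)

lemma cont_proj: "continuous_map (limT F f) (discrete_topology (V (F K))) (\<lambda>x. x K)"
  unfolding limT_def
  by (rule continuous_map_from_subtopology) (rule continuous_map_product_projection, simp)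

lemma sep_lemma:
  assumes conn: "tg_connected T E" and t: "t \<in> A"
    and Xs: "closedin (subtopology T (topspace T - {t})) Xs"
    and Ys: "closedin (subtopology T (topspace T - {t})) Ys"
    and cover: "Xs \<union> Ys = topspace T - {t}" and disj: "Xs \<inter> Ys = {}"
    and ne: "\<forall>x\<in>Xs. \<forall>y\<in>Ys. \<not> E x y"
    and Ao: "openin T A" and Ac: "closedin T A"
    and c: "c \<in> Xs" "c \<notin> A"
  shows "\<exists>v u. v \<in> Xs \<and> v \<notin> A \<and> u \<in> A \<and> E v u"
proof (rule ccontr)
  assume nex: "\<not> ?thesis"
  obtain Xc where Xc: "closedin T Xc" "Xs = Xc \<inter> (topspace T - {t})"
    using Xs unfolding closedin_subtopology by blast
  obtain Yc where Yc: "closedin T Yc" "Ys = Yc \<inter> (topspace T - {t})"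
    using Ys unfolding closedin_subtopology by blast
  have tT: "t \<in> topspace T" using Ao t openin_subset by blast
  define X where "X = Xs - A"
  define Y where "Y = topspace T - X"
  have X1: "X = Xc \<inter> (topspace T - A)" unfolding X_def using Xc t by auto
  have X2: "X = topspace T - (Yc \<union> A)" unfolding X_def using Xc Yc cover disj t by auto
  have "closedin T X" unfolding X1 using Xc(1) Ao by blast
  moreover have "closedin T Y" unfolding Y_def X2 using Yc(1) Ac
    by (metis Diff_Diff_Int closedin_Un closedin_subset inf.absorb_iff2)
  moreover have "X \<noteq> {}" using c X_def by blast
  moreover have "Y \<noteq> {}" using tT t unfolding Y_def X_def by blast
  moreover have "X \<inter> Y = {}" "X \<union> Y = topspace T" unfolding Y_def X_def using cover by auto
  moreover have "\<forall>x\<in>X. \<forall>y\<in>Y. \<not> E x y"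
  proof (intro ballI)
    fix x y assume "x \<in> X" "y \<in> Y"
    show "\<not> E x y"
    proof (cases "y \<in> A")
      case True then show ?thesis using nex \<open>x \<in> X\<close> unfolding X_def by blast
    next
      case False
      then have "y \<in> Ys" using \<open>y \<in> Y\<close> cover t unfolding Y_def X_def by auto
      then show ?thesis using ne \<open>x \<in> X\<close> unfolding X_def by blast
    qed
  qed
  ultimately show False using conn unfolding tg_connected_def by blast
qed

lemma part1:
  assumes fs: "fraisse_seq P F f" and xE: "x \<in> limE F f"
  shows "tg_endpoint TYPE('h) (limT F f) (limEd F) x"
  unfolding tg_endpoint_def
proof (intro conjI allI impI)
  have xF: "x \<in> limF F f" using xE unfolding limE_def by blast
  then show "x \<in> topspace (limT F f)" by (simp add: topspace_limT)
  fix T :: "'h topology" and EH h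
  assume H: "is_arc T EH \<and> embedding_map T (limT F f) h \<and>
        (\<forall>u\<in>topspace T. \<forall>v\<in>topspace T. EH u v = limEd F (h u) (h v)) \<and> x \<in> h ` topspace T"
  then have arc: "is_arc T EH" and emb: "embedding_map T (limT F f) h"
    and iff: "\<forall>u\<in>topspace T. \<forall>v\<in>topspace T. EH u v = limEd F (h u) (h v)"
    and xim: "x \<in> h ` topspace T" by auto
  have hom: "homeomorphic_map T (subtopology (limT F f) (h ` topspace T)) h"
    using emb unfolding embedding_map_def .
  have hcont: "continuous_map T (limT F f) h"
    using homeomorphic_imp_continuous_map[OF hom] continuous_map_in_subtopology by blast
  have hinj: "inj_on h (topspace T)" using homeomorphic_imp_injective_map[OF hom] .
  have hF: "\<And>u. u \<in> topspace T \<Longrightarrow> h u \<in> limF F f"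
    using continuous_map_image_subset_topspace[OF hcont] topspace_limT by blast
  have conn: "tg_connected T EH" and gr: "tg_graph T EH" using arc unfolding is_arc_def by auto
  obtain t where tT: "t \<in> topspace T" and xt: "x = h t" using xim by blast
  have "t \<in> arc_ends T EH"
  proof (rule ccontr)
    assume "t \<notin> arc_ends T EH"
    then have "\<not> tg_connected (subtopology T (topspace T - {t})) EH"
      using tT unfolding arc_ends_def by blast
    then obtain Xs Ys where
      Xs: "closedin (subtopology T (topspace T - {t})) Xs" and
      Ys: "closedin (subtopology T (topspace T - {t})) Ys" and
      ne: "Xs \<noteq> {}" "Ys \<noteq> {}" and disj: "Xs \<inter> Ys = {}" and
      cover: "Xs \<union> Ys = topspace T - {t}" and
      noe: "\<forall>x\<in>Xs. \<forall>y\<in>Ys. \<not> EH x y"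
      unfolding tg_connected_def by auto
    have noe': "\<forall>x\<in>Ys. \<forall>y\<in>Xs. \<not> EH x y"
    proof (intro ballI notI)
      fix a b assume "a \<in> Ys" "b \<in> Xs" "EH a b"
      moreover have "a \<in> topspace T" "b \<in> topspace T" using \<open>a \<in> Ys\<close> \<open>b \<in> Xs\<close> cover by auto
      ultimately have "EH b a" using gr unfolding tg_graph_def by blast
      then show False using noe \<open>a \<in> Ys\<close> \<open>b \<in> Xs\<close> by blast
    qed
    obtain c1 c2 where c1: "c1 \<in> Xs" and c2: "c2 \<in> Ys" using ne by blast
    have c1T: "c1 \<in> topspace T" "c1 \<noteq> t" and c2T: "c2 \<in> topspace T" "c2 \<noteq> t" using c1 c2 cover by auto
    have "h c1 \<noteq> x" using hinj c1T tT xt by (metis inj_on_contraD)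
    then obtain j1 where j1: "\<forall>K\<ge>j1. h c1 K \<noteq> x K" using limF_neq[OF hF[OF c1T(1)] xF] by blast
    have "h c2 \<noteq> x" using hinj c2T tT xt by (metis inj_on_contraD)
    then obtain j2 where j2: "\<forall>K\<ge>j2. h c2 K \<noteq> x K" using limF_neq[OF hF[OF c2T(1)] xF] by blast
    obtain m where m: "\<forall>K\<ge>m. x K \<in> Ends (F K)" using limE_Ends[OF fs xE] by blast
    define K where "K = max m (max j1 j2)"
    have xK: "x K \<in> Ends (F K)" using m K_def by simp
    define A where "A = {u \<in> topspace T. ((\<lambda>y. y K) \<circ> h) u \<in> {x K}}"
    have pc: "continuous_map T (discrete_topology (V (F K))) ((\<lambda>y. y K) \<circ> h)"
      using continuous_map_compose[OF hcont cont_proj] .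
    have xKV: "x K \<in> V (F K)" using limF_V[OF xF] .
    have Ao: "openin T A" unfolding A_def by (rule openin_continuous_map_preimage[OF pc]) (simp add: xKV)
    have Ac: "closedin T A" unfolding A_def by (rule closedin_continuous_map_preimage[OF pc]) (simp add: xKV)
    have tA: "t \<in> A" unfolding A_def using tT xt by simp
    have c1A: "c1 \<notin> A" unfolding A_def using j1 K_def by simp
    have c2A: "c2 \<notin> A" unfolding A_def using j2 K_def by simp
    obtain v1 u1 where vu1: "v1 \<in> Xs" "v1 \<notin> A" "u1 \<in> A" "EH v1 u1"
      using sep_lemma[OF conn tA Xs Ys cover disj noe Ao Ac c1 c1A] by blast
    obtain v2 u2 where vu2: "v2 \<in> Ys" "v2 \<notin> A" "u2 \<in> A" "EH v2 u2"
      using sep_lemma[OF conn tA Ys Xs _ _ noe' Ao Ac c2 c2A] cover disj by blast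
    have T1: "v1 \<in> topspace T" "u1 \<in> topspace T" "v2 \<in> topspace T" "u2 \<in> topspace T"
      using vu1 vu2 cover unfolding A_def by auto
    have "h v1 = h v2"
    proof (rule uniq_nb[OF fs xF xK])
      show "h u1 \<in> limF F f" "h u2 \<in> limF F f" "h v1 \<in> limF F f" "h v2 \<in> limF F f"
        using T1 hF by auto
      show "h u1 K = x K" "h u2 K = x K" using vu1 vu2 unfolding A_def by auto
      show "h v1 K \<noteq> x K" "h v2 K \<noteq> x K" using vu1 vu2 T1 unfolding A_def by auto
      show "limEd F (h v1) (h u1)" "limEd F (h v2) (h u2)" using iff T1 vu1 vu2 by auto
    qed
    then have "v1 = v2" using hinj T1 by (meson inj_onD)
    then show False using vu1 vu2 disj by blast
  qed
  then show "x \<in> h ` arc_ends T EH" using xt by blast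
qed


lemma conn_onD: "conn_on E S \<Longrightarrow> X \<noteq> {} \<Longrightarrow> Y \<noteq> {} \<Longrightarrow> X \<inter> Y = {} \<Longrightarrow> X \<union> Y = S
  \<Longrightarrow> \<forall>x\<in>X. \<forall>y\<in>Y. \<not> E x y \<Longrightarrow> False"
  unfolding conn_on_def by blast

lemma conn_on_sing: "conn_on E {x}"
  unfolding conn_on_def
proof
  assume "\<exists>X Y. X \<noteq> {} \<and> Y \<noteq> {} \<and> X \<inter> Y = {} \<and> X \<union> Y = {x} \<and> (\<forall>x\<in>X. \<forall>y\<in>Y. \<not> E x y)"
  then obtain X Y where H: "X \<noteq> {}" "Y \<noteq> {}" "X \<inter> Y = {}" "X \<union> Y = {x}" by blast
  have "X \<subseteq> {x}" "Y \<subseteq> {x}" using H(4) by auto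
  then have "X = {x}" "Y = {x}" using H(1,2) by (auto simp: subset_singleton_iff)
  then show False using H(3) by simp
qed

lemma conn_on_three:
  assumes "E p q" "E q p" "E q s" "E s q"
  shows "conn_on E {p, q, s}"
  unfolding conn_on_def
proof
  assume "\<exists>X Y. X \<noteq> {} \<and> Y \<noteq> {} \<and> X \<inter> Y = {} \<and> X \<union> Y = {p, q, s} \<and> (\<forall>x\<in>X. \<forall>y\<in>Y. \<not> E x y)"
  then obtain X Y where H: "X \<noteq> {}" "Y \<noteq> {}" "X \<inter> Y = {}" "X \<union> Y = {p, q, s}" "\<forall>x\<in>X. \<forall>y\<in>Y. \<not> E x y"
    by blast
  show False
  proof (cases "q \<in> X")
    case True
    have "p \<notin> Y" using H(5) assms(2) True by blast
    moreover have "s \<notin> Y" using H(5) assms(3) True by blast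
    moreover have "q \<notin> Y" using H(3) True by blast
    ultimately have "Y \<subseteq> {}" using H(4) by auto
    then show False using H(2) by simp
  next
    case False
    then have "q \<in> Y" using H(4) by blast
    have "p \<notin> X" using H(5) assms(1) \<open>q \<in> Y\<close> by blast
    moreover have "s \<notin> X" using H(5) assms(4) \<open>q \<in> Y\<close> by blast
    ultimately have "X \<subseteq> {}" using H(4) False by auto
    then show False using H(1) by simp
  qed
qed

lemma conn_image:
  assumes "conn_on EB D" "\<And>u v. u \<in> D \<Longrightarrow> v \<in> D \<Longrightarrow> EB u v \<Longrightarrow> EA (r u) (r v)"
  shows "conn_on EA (r ` D)"
  unfolding conn_on_def
proof
  assume "\<exists>X Y. X \<noteq> {} \<and> Y \<noteq> {} \<and> X \<inter> Y = {} \<and> X \<union> Y = r ` D \<and> (\<forall>x\<in>X. \<forall>y\<in>Y. \<not> EA x y)"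
  then obtain X Y where H: "X \<noteq> {}" "Y \<noteq> {}" "X \<inter> Y = {}" "X \<union> Y = r ` D" "\<forall>x\<in>X. \<forall>y\<in>Y. \<not> EA x y"
    by blast
  let ?X = "{u \<in> D. r u \<in> X}" and ?Y = "{u \<in> D. r u \<in> Y}"
  from H(1) obtain p where p: "p \<in> X" by auto
  have "p \<in> r ` D" using H(4) p by blast
  then obtain u where u: "u \<in> D" "r u = p" by blast
  have Xne: "?X \<noteq> {}" using u p by auto
  from H(2) obtain q where q: "q \<in> Y" by auto
  have "q \<in> r ` D" using H(4) q by blast
  then obtain v where v: "v \<in> D" "r v = q" by blast
  have Yne: "?Y \<noteq> {}" using v q by auto
  have I: "?X \<inter> ?Y = {}" using H(3) by auto
  have U: "?X \<union> ?Y = D" using H(4) by auto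
  have Ed: "\<forall>x\<in>?X. \<forall>y\<in>?Y. \<not> EB x y"
  proof (intro ballI notI)
    fix a b assume a: "a \<in> ?X" and b: "b \<in> ?Y" and e: "EB a b"
    then have "EA (r a) (r b)" using assms(2) by simp
    then show False using H(5) a b by simp
  qed
  show False by (rule conn_onD[OF assms(1) Xne Yne I U Ed])
qed

lemma conn_preimage:
  assumes Q: "conn_on EA Q" "Q \<subseteq> SA"
    and surj: "\<And>q. q \<in> SA \<Longrightarrow> \<exists>u\<in>SB. r u = q"
    and lift: "\<And>p q. p \<in> SA \<Longrightarrow> q \<in> SA \<Longrightarrow> EA p q \<Longrightarrow> \<exists>u\<in>SB. \<exists>v\<in>SB. r u = p \<and> r v = q \<and> EB u v"
    and fib: "\<And>q. q \<in> SA \<Longrightarrow> conn_on EB {u \<in> SB. r u = q}"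
  shows "conn_on EB {u \<in> SB. r u \<in> Q}"
  unfolding conn_on_def
proof
  assume "\<exists>X Y. X \<noteq> {} \<and> Y \<noteq> {} \<and> X \<inter> Y = {} \<and> X \<union> Y = {u \<in> SB. r u \<in> Q} \<and> (\<forall>x\<in>X. \<forall>y\<in>Y. \<not> EB x y)"
  then obtain X Y where H: "X \<noteq> {}" "Y \<noteq> {}" "X \<inter> Y = {}" "X \<union> Y = {u \<in> SB. r u \<in> Q}" "\<forall>x\<in>X. \<forall>y\<in>Y. \<not> EB x y"
    by blast
  have whole: "\<not> (u \<in> X \<and> v \<in> Y \<and> r u = r v)" for u v
  proof
    assume uv: "u \<in> X \<and> v \<in> Y \<and> r u = r v"
    define q where "q = r u"
    define Fq where "Fq = {w \<in> SB. r w = q}"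
    have "u \<in> X \<union> Y" "v \<in> X \<union> Y" using uv by simp_all
    then have uQ: "q \<in> Q" "u \<in> SB" "v \<in> SB" using uv unfolding H(4) q_def by simp_all
    have "u \<in> Fq \<inter> X" using uv uQ unfolding Fq_def q_def by simp
    then have n1: "Fq \<inter> X \<noteq> {}" by blast
    have "v \<in> Fq \<inter> Y" using uv uQ unfolding Fq_def q_def by simp
    then have n2: "Fq \<inter> Y \<noteq> {}" by blast
    have "Fq \<subseteq> X \<union> Y" unfolding H(4) Fq_def using uQ(1) by blast
    then have U: "(Fq \<inter> X) \<union> (Fq \<inter> Y) = Fq" by blast
    have I: "(Fq \<inter> X) \<inter> (Fq \<inter> Y) = {}" using H(3) by blast
    have "q \<in> SA" using uQ(1) Q(2) by blast
    then have c: "conn_on EB Fq" unfolding Fq_def by (rule fib)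
    have Ed: "\<forall>x\<in>Fq \<inter> X. \<forall>y\<in>Fq \<inter> Y. \<not> EB x y" using H(5) by blast
    show False by (rule conn_onD[OF c n1 n2 I U Ed])
  qed
  let ?X = "r ` X" and ?Y = "r ` Y"
  have disj: "?X \<inter> ?Y = {}" using whole by auto
  from H(1) obtain u0 where "u0 \<in> X" by auto
  then have n1: "?X \<noteq> {}" by auto
  from H(2) obtain v0 where "v0 \<in> Y" by auto
  then have n2: "?Y \<noteq> {}" by auto
  have U: "?X \<union> ?Y = Q"
  proof
    show "?X \<union> ?Y \<subseteq> Q" using H(4) by auto
    show "Q \<subseteq> ?X \<union> ?Y"
    proof
      fix q assume qQ: "q \<in> Q"
      then obtain u where u: "u \<in> SB" "r u = q" using surj Q(2) by auto
      then have "u \<in> X \<union> Y" using H(4) qQ by auto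
      then show "q \<in> ?X \<union> ?Y" using u by auto
    qed
  qed
  have Ed: "\<forall>x\<in>?X. \<forall>y\<in>?Y. \<not> EA x y"
  proof (intro ballI notI)
    fix p q assume p: "p \<in> ?X" and q: "q \<in> ?Y" and e: "EA p q"
    have pq: "p \<in> Q" "q \<in> Q" using p q H(4) by auto
    then obtain u v where uv: "u \<in> SB" "v \<in> SB" "r u = p" "r v = q" "EB u v" using lift Q(2) e by blast
    then have "u \<in> X \<union> Y" "v \<in> X \<union> Y" using H(4) pq by auto
    moreover have "u \<notin> Y"
    proof
      assume "u \<in> Y"
      from p obtain x where "x \<in> X" "p = r x" by blast
      then show False using whole[of x u] \<open>u \<in> Y\<close> uv(3) by simp
    qed
    moreover have "v \<notin> X"
    proof
      assume "v \<in> X"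
      from q obtain y where "y \<in> Y" "q = r y" by blast
      then show False using whole[of v y] \<open>v \<in> X\<close> uv(4) by simp
    qed
    ultimately show False using H(5) uv(5) by auto
  qed
  show False by (rule conn_onD[OF Q(1) n1 n2 disj U Ed])
qed

lemma comp_preimage:
  assumes C: "C \<in> components EA SA"
    and maps: "\<And>u. u \<in> SB \<Longrightarrow> r u \<in> SA"
    and surj: "\<And>q. q \<in> SA \<Longrightarrow> \<exists>u\<in>SB. r u = q"
    and pres: "\<And>u v. u \<in> SB \<Longrightarrow> v \<in> SB \<Longrightarrow> EB u v \<Longrightarrow> EA (r u) (r v)"
    and lift: "\<And>p q. p \<in> SA \<Longrightarrow> q \<in> SA \<Longrightarrow> EA p q \<Longrightarrow> \<exists>u\<in>SB. \<exists>v\<in>SB. r u = p \<and> r v = q \<and> EB u v"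
    and fib: "\<And>q. q \<in> SA \<Longrightarrow> conn_on EB {u \<in> SB. r u = q}"
  shows "{u \<in> SB. r u \<in> C} \<in> components EB SB"
proof -
  have C1: "C \<subseteq> SA" "C \<noteq> {}" "conn_on EA C"
    and C2: "\<And>D. C \<subseteq> D \<Longrightarrow> D \<subseteq> SA \<Longrightarrow> conn_on EA D \<Longrightarrow> D = C"
    using C unfolding components_def by auto
  let ?Pre = "{u \<in> SB. r u \<in> C}"
  from C1(2) obtain q0 where "q0 \<in> C" by auto
  then obtain u0 where "u0 \<in> SB" "r u0 = q0" using surj C1(1) by auto
  then have ne: "?Pre \<noteq> {}" using \<open>q0 \<in> C\<close> by auto
  have cn: "conn_on EB ?Pre" using conn_preimage[OF C1(3) C1(1) surj lift fib] by simp
  have mx: "D = ?Pre" if D: "?Pre \<subseteq> D" "D \<subseteq> SB" "conn_on EB D" for D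
  proof -
    have "conn_on EA (r ` D)" by (rule conn_image[OF D(3)]) (use pres D(2) in auto)
    moreover have "r ` D \<subseteq> SA" using maps D(2) by auto
    moreover have "C \<subseteq> r ` D"
    proof
      fix q assume "q \<in> C"
      then obtain u where "u \<in> SB" "r u = q" using surj C1(1) by auto
      then show "q \<in> r ` D" using D(1) \<open>q \<in> C\<close> by auto
    qed
    ultimately have "r ` D = C" using C2 by simp
    then show ?thesis using D by auto
  qed
  have "?Pre \<subseteq> SB" by auto
  then show ?thesis unfolding components_def using ne cn mx by auto
qed

lemma components_sub_eq: "C \<in> components E S \<Longrightarrow> C' \<in> components E S \<Longrightarrow> C \<subseteq> C' \<Longrightarrow> C = C'"
  unfolding components_def by blast


lemma walk_nb:
  "walk E ys \<Longrightarrow> distinct ys \<Longrightarrow> 2 \<le> length ys \<Longrightarrow> v \<in> set ys \<Longrightarrow> \<exists>u\<in>set ys. u \<noteq> v \<and> (E v u \<or> E u v)"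
proof (induction ys)
  case Nil then show ?case by simp
next
  case (Cons x ys)
  then obtain y ys' where ys: "ys = y # ys'" by (cases ys) auto
  have exy: "E x y" "walk E ys" using Cons.prems(1) ys by auto
  have xy: "x \<noteq> y" using Cons.prems(2) ys by auto
  show ?case
  proof (cases "v = x")
    case True then show ?thesis using exy xy ys by auto
  next
    case False
    then have vys: "v \<in> set ys" using Cons.prems(4) by simp
    show ?thesis
    proof (cases "ys' = []")
      case True
      then have "v = y" using vys ys by simp
      then show ?thesis using exy xy by auto
    next
      case False
      then have "2 \<le> length ys" using ys by (cases ys') auto
      then show ?thesis using Cons.IH exy(2) Cons.prems(2) vys by auto
    qed
  qed
qed

lemma cycle_rotate:
  assumes "walk E (us @ w # vs)" "E (last (us @ w # vs)) (hd (us @ w # vs))"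
  shows "walk E (w # vs @ us) \<and> E (last (w # vs @ us)) w"
proof -
  have w1: "walk E us" "walk E (w # vs)" "us \<noteq> [] \<longrightarrow> E (last us) w"
    using assms(1) by (simp_all add: walk_append)
  have "walk E ((w # vs) @ us)"
  proof (cases "us = []")
    case True then show ?thesis using w1 by simp
  next
    case False
    then have e: "E (last (w # vs)) (hd us)" using assms(2) by simp
    have "walk E ((w # vs) @ us)" unfolding walk_append using w1 False e by blast
    then show ?thesis by simp
  qed
  moreover have "E (last (w # vs @ us)) w"
  proof (cases "us = []")
    case True then show ?thesis using assms(2) by simp
  next
    case False then show ?thesis using w1 by simp
  qed
  ultimately show ?thesis by simp
qed

lemma distinct_hd_last: "distinct ys \<Longrightarrow> 2 \<le> length ys \<Longrightarrow> hd ys \<noteq> last ys"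
  by (cases ys) (auto simp: last_conv_nth)

section \<open>The construction: splitting an edge at a ramification point\<close>

locale constr =
  fixes P :: "enat set" and A :: tobj and a a1 w z :: nat
  assumes objA: "obj P A" and P3: "\<forall>p\<in>P. 3 \<le> p" and aR: "a \<in> ram A"
    and a1V: "a1 \<in> V A" and a1a: "a1 \<noteq> a" and aa1: "Ed A a a1"
    and wV: "w \<notin> V A" and zV: "z \<notin> V A" and wz: "w \<noteq> z"
begin

definition EdB :: "nat \<Rightarrow> nat \<Rightarrow> bool" where
  "EdB u v \<longleftrightarrow> (Ed A u v \<and> \<not> (u = a \<and> v = a1) \<and> \<not> (u = a1 \<and> v = a)) \<or> (u = v \<and> (u = w \<or> u = z))
     \<or> (u = a \<and> v = w) \<or> (u = w \<and> v = a) \<or> (u = a1 \<and> v = w) \<or> (u = w \<and> v = a1)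
     \<or> (u = w \<and> v = z) \<or> (u = z \<and> v = w)"

definition B :: tobj where
  "B = \<lparr>V = insert w (insert z (V A)), Ed = EdB, lab = (lab A)(w := lab A a, z := None)\<rparr>"

definition g :: "nat \<Rightarrow> nat" where
  "g u = (if u = w \<or> u = z then a else u)"

lemma fgA: "fgraph A" using objA by (rule obj_fgraph)

lemma finA: "finite (V A)" using fgA unfolding fgraph_def by blast
lemma EdA_V: "Ed A u v \<Longrightarrow> u \<in> V A \<and> v \<in> V A" using fgA unfolding fgraph_def by blast
lemma EdA_refl: "u \<in> V A \<Longrightarrow> Ed A u u" using fgA unfolding fgraph_def by blast
lemma EdA_sym: "Ed A u v \<Longrightarrow> Ed A v u" using fgA unfolding fgraph_def by blast

lemma aV: "a \<in> V A" using aR unfolding ram_def by blast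
lemma ordA_a: "ord A a \<ge> 3" using aR unfolding ram_def by blast
lemma aw: "a \<noteq> w" "a \<noteq> z" "a1 \<noteq> w" "a1 \<noteq> z" using aV a1V wV zV by auto

lemma VB: "V B = insert w (insert z (V A))" unfolding B_def by simp
lemma EdB_B: "Ed B = EdB" unfolding B_def by simp
lemma labB: "lab B = (lab A)(w := lab A a, z := None)" unfolding B_def by simp

lemma EdB_V: "EdB u v \<Longrightarrow> u \<in> V B \<and> v \<in> V B"
  unfolding EdB_def VB using EdA_V aV a1V by auto

lemma EdB_sym: "EdB u v \<Longrightarrow> EdB v u"
  unfolding EdB_def using EdA_sym by auto

lemma EdB_refl: "u \<in> V B \<Longrightarrow> EdB u u"
  unfolding EdB_def VB using EdA_refl a1a by auto

lemma EdB_A: "u \<in> V A \<Longrightarrow> v \<in> V A \<Longrightarrow> EdB u v \<Longrightarrow> Ed A u v"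
  unfolding EdB_def using wV zV by auto

lemma EdA_B: "Ed A u v \<Longrightarrow> \<not> (u = a \<and> v = a1) \<Longrightarrow> \<not> (u = a1 \<and> v = a) \<Longrightarrow> EdB u v"
  unfolding EdB_def by auto

lemma EdB_z: "EdB z v \<longleftrightarrow> v = z \<or> v = w"
  unfolding EdB_def using EdA_V zV wz aw by auto

lemma EdB_w: "EdB w v \<longleftrightarrow> v = w \<or> v = a \<or> v = a1 \<or> v = z"
  unfolding EdB_def using EdA_V wV wz aw by auto

lemma fgB: "fgraph B"
  unfolding fgraph_def
proof (intro conjI allI impI ballI)
  show "finite (V B)" unfolding VB using finA by simp
  fix x y
  show "Ed B x y \<Longrightarrow> x \<in> V B" "Ed B x y \<Longrightarrow> y \<in> V B" using EdB_V unfolding EdB_B by auto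
  show "Ed B x y \<Longrightarrow> Ed B y x" using EdB_sym unfolding EdB_B by auto
next
  fix x assume "x \<in> V B" then show "Ed B x x" using EdB_refl unfolding EdB_B by auto
qed

lemma NB_other: "c \<in> V A \<Longrightarrow> c \<noteq> a \<Longrightarrow> c \<noteq> a1 \<Longrightarrow>
  {b \<in> V B. b \<noteq> c \<and> EdB c b} = {b \<in> V A. b \<noteq> c \<and> Ed A c b}"
  unfolding VB EdB_def using EdA_V wV zV by auto

lemma NB_a: "{b \<in> V B. b \<noteq> a \<and> EdB a b} = insert w ({b \<in> V A. b \<noteq> a \<and> Ed A a b} - {a1})"
  unfolding VB EdB_def using EdA_V wV zV aw a1a by auto

lemma NB_a1: "{b \<in> V B. b \<noteq> a1 \<and> EdB a1 b} = insert w ({b \<in> V A. b \<noteq> a1 \<and> Ed A a1 b} - {a})"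
  unfolding VB EdB_def using EdA_V wV zV aw a1a by auto

lemma NB_w: "{b \<in> V B. b \<noteq> w \<and> EdB w b} = {a, a1, z}"
  unfolding VB using EdB_w aV a1V wz aw by auto

lemma NB_z: "{b \<in> V B. b \<noteq> z \<and> EdB z b} = {w}"
  unfolding VB using EdB_z wz by auto

lemma card_swap: "finite N \<Longrightarrow> x \<in> N \<Longrightarrow> y \<notin> N \<Longrightarrow> card (insert y (N - {x})) = card N"
proof -
  assume f: "finite N" and x: "x \<in> N" and y: "y \<notin> N"
  have "card (insert y (N - {x})) = Suc (card (N - {x}))" using f y by simp
  also have "\<dots> = Suc (card N - 1)" using x by (simp add: card_Diff_singleton)
  also have "\<dots> = card N"
  proof -
    have "N \<noteq> {}" using x by blast
    then have "card N > 0" using f by (simp add: card_gt_0_iff)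
    then show ?thesis by simp
  qed
  finally show ?thesis .
qed

lemma ordB_A: "c \<in> V A \<Longrightarrow> ord B c = ord A c"
proof -
  assume cV: "c \<in> V A"
  have fin: "finite {b \<in> V A. b \<noteq> c \<and> Ed A c b}" using finA by simp
  show ?thesis
  proof (cases "c = a")
    case True
    have i1: "a1 \<in> {b \<in> V A. b \<noteq> a \<and> Ed A a b}" using a1V a1a aa1 by simp
    have i2: "w \<notin> {b \<in> V A. b \<noteq> a \<and> Ed A a b}" using wV by simp
    have i3: "finite {b \<in> V A. b \<noteq> a \<and> Ed A a b}" using finA by simp
    have "card (insert w ({b \<in> V A. b \<noteq> a \<and> Ed A a b} - {a1})) = card {b \<in> V A. b \<noteq> a \<and> Ed A a b}"
      by (rule card_swap[OF i3 i1 i2])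
    then show ?thesis unfolding ord_def EdB_B True NB_a .
  next
    case False
    note F1 = False
    show ?thesis
    proof (cases "c = a1")
      case True
      have i1: "a \<in> {b \<in> V A. b \<noteq> a1 \<and> Ed A a1 b}" using aV a1a aa1 EdA_sym by auto
      have i2: "w \<notin> {b \<in> V A. b \<noteq> a1 \<and> Ed A a1 b}" using wV by simp
      have i3: "finite {b \<in> V A. b \<noteq> a1 \<and> Ed A a1 b}" using finA by simp
      have "card (insert w ({b \<in> V A. b \<noteq> a1 \<and> Ed A a1 b} - {a})) = card {b \<in> V A. b \<noteq> a1 \<and> Ed A a1 b}"
        by (rule card_swap[OF i3 i1 i2])
      then show ?thesis unfolding ord_def EdB_B True NB_a1 .
    next
      case False
      then show ?thesis unfolding ord_def EdB_B using NB_other[OF cV F1 False] by simp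
    qed
  qed
qed

lemma ordB_w: "ord B w = 3"
  unfolding ord_def EdB_B NB_w using aw a1a by (simp add: numeral_3_eq_3)

lemma ordB_z: "ord B z = 1"
  unfolding ord_def EdB_B NB_z by simp

lemma connA: "conn_on (Ed A) (V A)" using objA unfolding obj_def ftree_def by blast

lemma acycA: "\<not> has_cycle A" using objA unfolding obj_def ftree_def by blast

lemma EdB_aa1: "\<not> EdB a a1" "\<not> EdB a1 a"
  unfolding EdB_def using a1a aw by auto

lemma connB_aux:
  assumes I: "X \<inter> Y = {}" and U: "X \<union> Y = V B" and Yne: "Y \<noteq> {}" and wX: "w \<in> X"
    and e1: "\<forall>x\<in>X. \<forall>y\<in>Y. \<not> EdB x y"
  shows False
proof -
  have "EdB w a" "EdB w a1" "EdB w z" using EdB_w by auto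
  then have inX: "a \<in> X" "a1 \<in> X" "z \<in> X"
    using e1 wX U unfolding VB using aV a1V by blast+
  have YA: "Y \<subseteq> V A" using U I wX inX unfolding VB by blast
  let ?X = "X \<inter> V A"
  have n1: "?X \<noteq> {}" using inX aV by blast
  have I': "?X \<inter> Y = {}" using I by blast
  have U': "?X \<union> Y = V A" using U YA unfolding VB by blast
  have E': "\<forall>x\<in>?X. \<forall>y\<in>Y. \<not> Ed A x y"
  proof (intro ballI notI)
    fix x y assume x: "x \<in> ?X" and y: "y \<in> Y" and e: "Ed A x y"
    have "y \<noteq> a" "y \<noteq> a1" using y inX I by blast+
    then have "EdB x y" using EdA_B[OF e] by blast
    then show False using e1 x y by blast
  qed
  show False by (rule conn_onD[OF connA n1 Yne I' U' E'])
qed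

lemma connB: "conn_on (Ed B) (V B)"
  unfolding conn_on_def EdB_B
proof
  assume "\<exists>X Y. X \<noteq> {} \<and> Y \<noteq> {} \<and> X \<inter> Y = {} \<and> X \<union> Y = V B \<and> (\<forall>x\<in>X. \<forall>y\<in>Y. \<not> EdB x y)"
  then obtain X Y where H: "X \<noteq> {}" "Y \<noteq> {}" "X \<inter> Y = {}" "X \<union> Y = V B" "\<forall>x\<in>X. \<forall>y\<in>Y. \<not> EdB x y"
    by blast
  have "w \<in> V B" unfolding VB by simp
  show False
  proof (cases "w \<in> X")
    case True then show False using connB_aux[OF H(3,4,2) True H(5)] by simp
  next
    case False
    then have wY: "w \<in> Y" using H(4) \<open>w \<in> V B\<close> by blast
    have I: "Y \<inter> X = {}" using H(3) by blast
    have U: "Y \<union> X = V B" using H(4) by blast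
    have E: "\<forall>x\<in>Y. \<forall>y\<in>X. \<not> EdB x y" using H(5) EdB_sym by blast
    show False using connB_aux[OF I U H(1) wY E] by simp
  qed
qed

lemma z_not_in_walk:
  assumes "walk EdB ys" "distinct ys" "2 \<le> length ys" "w \<notin> set ys"
  shows "z \<notin> set ys"
proof
  assume "z \<in> set ys"
  then obtain u where "u \<in> set ys" "u \<noteq> z" "EdB z u \<or> EdB u z" using walk_nb[OF assms(1-3)] by blast
  then have "u = w" using EdB_z EdB_sym by blast
  then show False using assms(4) \<open>u \<in> set ys\<close> by simp
qed

lemma acycB: "\<not> has_cycle B"
proof
  assume "has_cycle B"
  then obtain xs where xs: "distinct xs" "3 \<le> length xs" "set xs \<subseteq> V B" "walk EdB xs" "EdB (last xs) (hd xs)"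
    unfolding has_cycle_walk EdB_B by blast
  show False
  proof (cases "w \<in> set xs")
    case False
    have "z \<notin> set xs" using z_not_in_walk[OF xs(4,1) _ False] xs(2) by simp
    then have sA: "set xs \<subseteq> V A" using xs(3) False unfolding VB by blast
    have "walk (Ed A) xs" using walk_mono[OF xs(4)] EdB_A sA by blast
    moreover have "xs \<noteq> []" using xs(2) by auto
    then have "last xs \<in> V A" "hd xs \<in> V A" using sA by auto
    then have "Ed A (last xs) (hd xs)" using EdB_A xs(5) by blast
    ultimately have "has_cycle A" unfolding has_cycle_walk using xs(1,2) sA by blast
    then show False using acycA by simp
  next
    case True
    then obtain us vs where uv: "xs = us @ w # vs" by (meson split_list)
    define ys where "ys = vs @ us"
    have rot: "walk EdB (w # ys) \<and> EdB (last (w # ys)) w"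
      using cycle_rotate[of EdB us w vs] xs(4,5) uv unfolding ys_def by simp
    have dys: "distinct (w # ys)" using xs(1) uv unfolding ys_def by auto
    have lys: "2 \<le> length ys" using xs(2) uv unfolding ys_def by simp
    then have yne: "ys \<noteq> []" by auto
    have wys: "w \<notin> set ys" using dys by simp
    have wk: "walk EdB ys" using rot yne by (simp add: walk_Cons)
    have sB: "set ys \<subseteq> V B" using xs(3) uv unfolding ys_def by auto
    have "z \<notin> set ys" using z_not_in_walk[OF wk _ lys wys] dys by simp
    then have sA: "set ys \<subseteq> V A" using sB wys unfolding VB by blast
    have hd1: "EdB w (hd ys)" using rot yne by (simp add: walk_Cons)
    have hd2: "hd ys \<in> V A" using sA yne hd_in_set by (meson subsetD)
    have hdy: "hd ys = a \<or> hd ys = a1" using hd1 hd2 EdB_w wV zV by auto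
    have l1: "EdB w (last ys)" using rot yne EdB_sym by simp
    have l2: "last ys \<in> V A" using sA yne last_in_set by (meson subsetD)
    have lay: "last ys = a \<or> last ys = a1" using l1 l2 EdB_w wV zV by auto
    have "distinct ys" using dys by simp
    then have hl: "hd ys \<noteq> last ys" using distinct_hd_last lys by blast
    have eA: "Ed A (last ys) (hd ys)" using hdy lay hl aa1 EdA_sym by auto
    have wA: "walk (Ed A) ys" using walk_mono[OF wk] EdB_A sA by blast
    have "length ys \<noteq> 2"
    proof
      assume "length ys = 2"
      then obtain p q where pq: "ys = [p, q]" by (cases ys; cases "tl ys") auto
      then have "EdB p q" using wk by simp
      moreover have "p = hd ys" "q = last ys" using pq by simp_all
      ultimately show False using hdy lay hl EdB_aa1 by auto
    qed
    then have "3 \<le> length ys" using lys by simp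
    then have "has_cycle A" unfolding has_cycle_walk using dys sA wA eA by auto
    then show False using acycA by simp
  qed
qed

lemma ramB_A: "c \<in> V A \<Longrightarrow> c \<in> ram B \<longleftrightarrow> c \<in> ram A"
  unfolding ram_def using ordB_A VB by auto

lemma EndsB_A: "c \<in> V A \<Longrightarrow> c \<in> Ends B \<longleftrightarrow> c \<in> Ends A"
  unfolding Ends_def using ordB_A VB by auto

lemma w_ram: "w \<in> ram B" unfolding ram_def VB using ordB_w by simp
lemma z_Ends: "z \<in> Ends B" unfolding Ends_def VB using ordB_z by simp
lemma w_notEnds: "w \<notin> Ends B" unfolding Ends_def using ordB_w by simp
lemma z_notram: "z \<notin> ram B" unfolding ram_def using ordB_z by simp

lemma labB_A: "c \<in> V A \<Longrightarrow> lab B c = lab A c"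
  unfolding labB using wV zV by auto

lemma objB: "obj P B"
  unfolding obj_def
proof (intro conjI ballI)
  show "ftree B" unfolding ftree_def using fgB connB acycB VB by auto
  show "ram B \<noteq> {}" using w_ram by blast
next
  fix c assume c: "c \<in> V B"
  show "c \<in> Ends B \<or> c \<in> ram B"
  proof (cases "c \<in> V A")
    case True
    then have "c \<in> Ends A \<or> c \<in> ram A" using objA unfolding obj_def by blast
    then show ?thesis using True ramB_A EndsB_A by blast
  next
    case False
    then have "c = w \<or> c = z" using c VB by auto
    then show ?thesis using w_ram z_Ends by blast
  qed
next
  fix c assume c: "c \<in> ram B"
  then have cVB: "c \<in> V B" unfolding ram_def by blast
  show "\<exists>p\<in>P. lab B c = Some p \<and> enat (ord B c) \<le> p"
  proof (cases "c \<in> V A")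
    case True
    then have "c \<in> ram A" using ramB_A c by blast
    then show ?thesis using objA True labB_A ordB_A unfolding obj_def by auto
  next
    case False
    then have "c = w" using cVB c z_notram VB by auto
    obtain p where p: "p \<in> P" "lab A a = Some p" using objA aR unfolding obj_def by blast
    then have "3 \<le> p" using P3 by blast
    moreover have "lab B w = Some p" using p labB wz by simp
    ultimately show ?thesis using p(1) \<open>c = w\<close> ordB_w by (auto simp: numeral_eq_enat)
  qed
next
  fix c assume c: "c \<in> Ends B"
  then have cVB: "c \<in> V B" unfolding Ends_def by blast
  show "lab B c = None"
  proof (cases "c \<in> V A")
    case True
    then have "c \<in> Ends A" using EndsB_A c by blast
    then show ?thesis using objA True labB_A unfolding obj_def by auto
  next
    case False
    then have "c = z" using cVB c w_notEnds VB by auto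
    then show ?thesis using labB wz by simp
  qed
qed

lemma g_V: "b \<in> V B \<Longrightarrow> g b \<in> V A"
  unfolding g_def VB using aV by auto

lemma g_A: "c \<in> V A \<Longrightarrow> g c = c"
  unfolding g_def using wV zV by auto

lemma g_pres_aux: "EdB u v \<Longrightarrow> u = w \<or> u = z \<Longrightarrow> Ed A (g u) (g v)"
proof -
  assume e: "EdB u v" and u: "u = w \<or> u = z"
  have gu: "g u = a" using u unfolding g_def by simp
  have "v = w \<or> v = z \<or> v = a \<or> v = a1" using e u EdB_w EdB_z by blast
  then have "g v = a \<or> g v = a1" unfolding g_def using aw by auto
  then show ?thesis using gu EdA_refl[OF aV] aa1 by auto
qed

lemma g_pres: "EdB u v \<Longrightarrow> Ed A (g u) (g v)"
proof -
  assume e: "EdB u v"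
  show ?thesis
  proof (cases "u = w \<or> u = z")
    case True then show ?thesis using g_pres_aux e by blast
  next
    case F: False
    show ?thesis
    proof (cases "v = w \<or> v = z")
      case True
      then have "Ed A (g v) (g u)" using g_pres_aux EdB_sym e by blast
      then show ?thesis using EdA_sym by blast
    next
      case False
      then have "u \<in> V A" "v \<in> V A" using F EdB_V[OF e] VB by auto
      then show ?thesis using EdB_A e g_A by simp
    qed
  qed
qed

lemma epiB: "epi B A g"
  unfolding epi_def
proof (intro conjI ballI)
  show "\<And>b. b \<in> V B \<Longrightarrow> g b \<in> V A" using g_V .
  show "g ` V B = V A"
  proof
    show "g ` V B \<subseteq> V A" using g_V by blast
    show "V A \<subseteq> g ` V B"
    proof
      fix c assume "c \<in> V A"
      then have "c \<in> V B" "g c = c" using VB g_A by auto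
      then show "c \<in> g ` V B" by (metis imageI)
    qed
  qed
  fix p q assume p: "p \<in> V A" and q: "q \<in> V A"
  show "Ed A p q = (\<exists>b1\<in>V B. \<exists>b2\<in>V B. g b1 = p \<and> g b2 = q \<and> Ed B b1 b2)"
  proof
    assume e: "Ed A p q"
    show "\<exists>b1\<in>V B. \<exists>b2\<in>V B. g b1 = p \<and> g b2 = q \<and> Ed B b1 b2"
    proof (cases "p = a \<and> q = a1")
      case True
      have "w \<in> V B" "a1 \<in> V B" "g w = a" "g a1 = a1" "EdB w a1"
        using VB g_def aw EdB_w a1V by auto
      then show ?thesis using True EdB_B by metis
    next
      case F1: False
      show ?thesis
      proof (cases "p = a1 \<and> q = a")
        case True
        have "w \<in> V B" "a1 \<in> V B" "g w = a" "g a1 = a1" "EdB a1 w"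
          using VB g_def aw EdB_w EdB_sym a1V by auto
        then show ?thesis using True EdB_B by metis
      next
        case False
        have "EdB p q" using EdA_B[OF e] F1 False by blast
        moreover have "p \<in> V B" "q \<in> V B" "g p = p" "g q = q" using p q VB g_A by auto
        ultimately show ?thesis using EdB_B by metis
      qed
    qed
  next
    assume "\<exists>b1\<in>V B. \<exists>b2\<in>V B. g b1 = p \<and> g b2 = q \<and> Ed B b1 b2"
    then obtain b1 b2 where "g b1 = p" "g b2 = q" "EdB b1 b2" using EdB_B by auto
    then show "Ed A p q" using g_pres by blast
  qed
qed

lemma fiber_g: "c \<in> V A \<Longrightarrow> {b \<in> V B. g b = c} = (if c = a then {a, w, z} else {c})"
  unfolding VB g_def using aV wV zV by auto

lemma EdB_tw: "t = a \<or> t = a1 \<Longrightarrow> EdB t w \<and> EdB w t \<and> EdB w z \<and> EdB z w"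
  using EdB_w EdB_sym by blast

lemma monoB: "monotone_map B A g"
  unfolding monotone_map_def
proof
  fix c assume c: "c \<in> V A"
  show "conn_on (Ed B) {b \<in> V B. g b = c}"
  proof (cases "c = a")
    case True
    have "conn_on EdB {a, w, z}" using EdB_tw[of a] by (intro conn_on_three) auto
    then show ?thesis using fiber_g[OF c] True EdB_B by simp
  next
    case False
    then show ?thesis using fiber_g[OF c] conn_on_sing by simp
  qed
qed

lemma wc_c:
  assumes cR: "c \<in> ram A"
  shows "wc_witness B A g c c"
proof -
  have cV: "c \<in> V A" using cR unfolding ram_def by blast
  define t where "t = (if c = a then a1 else a)"
  define r where "r u = (if u = w \<or> u = z then t else u)" for u
  let ?SA = "V A - {c}" and ?SB = "V B - {c}"
  have tV: "t \<in> V A" "t \<noteq> c" "t = a \<or> t = a1" unfolding t_def using aV a1V a1a by auto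
  have rA: "u \<in> V A \<Longrightarrow> r u = u" for u unfolding r_def using wV zV by auto
  have maps: "\<And>u. u \<in> ?SB \<Longrightarrow> r u \<in> ?SA" unfolding r_def VB using tV by auto
  have surj: "\<And>q. q \<in> ?SA \<Longrightarrow> \<exists>u\<in>?SB. r u = q"
  proof -
    fix q assume "q \<in> ?SA"
    then have "q \<in> ?SB" "r q = q" using VB rA by auto
    then show "\<exists>u\<in>?SB. r u = q" by blast
  qed
  have pres: "\<And>u v. u \<in> ?SB \<Longrightarrow> v \<in> ?SB \<Longrightarrow> EdB u v \<Longrightarrow> Ed A (r u) (r v)"
  proof -
    fix u v assume u: "u \<in> ?SB" and v: "v \<in> ?SB" and e: "EdB u v"
    show "Ed A (r u) (r v)"
    proof (cases "u \<in> V A \<and> v \<in> V A")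
      case True then show ?thesis using rA EdB_A e by simp
    next
      case False
      have aux: "r x \<in> {a, a1} \<and> r y \<in> {a, a1}" if xy: "EdB x y" "x = w \<or> x = z" for x y
      proof -
        have "r x = t" using xy(2) unfolding r_def by simp
        moreover have "y = w \<or> y = z \<or> y = a \<or> y = a1" using xy EdB_w EdB_z by blast
        then have "r y = t \<or> r y = a \<or> r y = a1" unfolding r_def using aw by auto
        ultimately show ?thesis using tV(3) by auto
      qed
      have "u = w \<or> u = z \<or> v = w \<or> v = z" using False u v VB by auto
      then have "r u \<in> {a, a1} \<and> r v \<in> {a, a1}" using aux e EdB_sym by blast
      then show ?thesis using EdA_refl aV a1V aa1 EdA_sym by auto
    qed
  qed
  have lift: "\<And>p q. p \<in> ?SA \<Longrightarrow> q \<in> ?SA \<Longrightarrow> Ed A p q \<Longrightarrow> \<exists>u\<in>?SB. \<exists>v\<in>?SB. r u = p \<and> r v = q \<and> EdB u v"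
  proof -
    fix p q assume p: "p \<in> ?SA" and q: "q \<in> ?SA" and e: "Ed A p q"
    show "\<exists>u\<in>?SB. \<exists>v\<in>?SB. r u = p \<and> r v = q \<and> EdB u v"
    proof (cases "p = a \<and> q = a1")
      case True
      then have "c \<noteq> a" using p by auto
      then have "t = a" unfolding t_def by simp
      have "w \<in> ?SB" "a1 \<in> ?SB" "r w = a" "r a1 = a1" "EdB w a1"
        using VB \<open>t = a\<close> q True rA a1V EdB_w wV cV unfolding r_def by auto
      then show ?thesis using True by metis
    next
      case F1: False
      show ?thesis
      proof (cases "p = a1 \<and> q = a")
        case True
        then have "c \<noteq> a" using q by auto
        then have "t = a" unfolding t_def by simp
        have "w \<in> ?SB" "a1 \<in> ?SB" "r w = a" "r a1 = a1" "EdB a1 w"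
          using VB \<open>t = a\<close> p True rA a1V EdB_w EdB_sym wV cV unfolding r_def by auto
        then show ?thesis using True by metis
      next
        case False
        have "EdB p q" using EdA_B[OF e] F1 False by blast
        moreover have "p \<in> ?SB" "q \<in> ?SB" "r p = p" "r q = q" using p q VB rA by auto
        ultimately show ?thesis by metis
      qed
    qed
  qed
  have fib: "\<And>q. q \<in> ?SA \<Longrightarrow> conn_on EdB {u \<in> ?SB. r u = q}"
  proof -
    fix q assume q: "q \<in> ?SA"
    have fq: "{u \<in> ?SB. r u = q} = (if q = t then {t, w, z} else {q})"
      using q tV wV zV cV unfolding VB r_def by auto
    show "conn_on EdB {u \<in> ?SB. r u = q}"
    proof (cases "q = t")
      case True
      have "conn_on EdB {t, w, z}" using EdB_tw[OF tV(3)] by (intro conn_on_three) auto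
      then show ?thesis using fq True by simp
    next
      case False then show ?thesis using fq conn_on_sing by simp
    qed
  qed
  define \<pi> where "\<pi> C = {u \<in> ?SB. r u \<in> C}" for C
  have comp: "\<pi> C \<in> comps_minus B c" if C: "C \<in> comps_minus A c" for C
    unfolding \<pi>_def comps_minus_def EdB_B
    by (rule comp_preimage[OF C[unfolded comps_minus_def] maps surj pres lift fib])
  have CS: "C \<subseteq> ?SA" if "C \<in> comps_minus A c" for C
    using that unfolding comps_minus_def components_def by blast
  have sub: "{x \<in> V B. g x \<in> C} \<subseteq> \<pi> C" if C: "C \<in> comps_minus A c" for C
  proof
    fix x assume x: "x \<in> {x \<in> V B. g x \<in> C}"
    then have gx: "g x \<in> C" "x \<in> V B" by auto
    have "g x \<noteq> c" using CS[OF C] gx by blast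
    then have "x \<noteq> c" using g_A cV by auto
    moreover have "r x = g x"
    proof (cases "x = w \<or> x = z")
      case True
      then have "g x = a" unfolding g_def by simp
      then have "c \<noteq> a" using \<open>g x \<noteq> c\<close> by simp
      then show ?thesis using True \<open>g x = a\<close> unfolding r_def t_def by simp
    next
      case False
      then show ?thesis unfolding r_def g_def by simp
    qed
    ultimately show "x \<in> \<pi> C" unfolding \<pi>_def using gx by simp
  qed
  have inj: "inj_on \<pi> (comps_minus A c)"
  proof (rule inj_onI)
    fix C1 C2 assume C1: "C1 \<in> comps_minus A c" and C2: "C2 \<in> comps_minus A c" and eq: "\<pi> C1 = \<pi> C2"
    have "C1 \<subseteq> C2"
    proof
      fix q assume "q \<in> C1"
      then have "q \<in> ?SA" using CS[OF C1] by blast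
      then have "q \<in> \<pi> C1" unfolding \<pi>_def using \<open>q \<in> C1\<close> rA VB by auto
      then have "q \<in> \<pi> C2" using eq by simp
      then show "q \<in> C2" unfolding \<pi>_def using rA \<open>q \<in> ?SA\<close> by auto
    qed
    then show "C1 = C2" using components_sub_eq C1 C2 unfolding comps_minus_def by blast
  qed
  have "c \<in> V B" "g c = c" "ord B c \<ge> ord A c" using cV VB g_A ordB_A by auto
  then show ?thesis unfolding wc_witness_def using inj comp sub by blast
qed

lemma arrowB: "arrow P B A (g, id)"
  unfolding arrow_def fst_conv snd_conv
proof (intro conjI ballI allI impI)
  show "obj P B" by (rule objB)
  show "obj P A" by (rule objA)
  show "epi B A g" by (rule epiB)
  show "monotone_map B A g" by (rule monoB)
  show "weakly_coherent B A g" unfolding weakly_coherent_def using wc_c by blast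
next
  fix c b assume c: "c \<in> ram A" and wb: "wc_witness B A g c b"
  then have b: "b \<in> V B" "g b = c" "ord B b \<ge> ord A c" unfolding wc_witness_def by auto
  have "ord A c \<ge> 3" using c unfolding ram_def by blast
  then have "b \<noteq> z" using b ordB_z by auto
  show "lab B b = lab A c"
  proof (cases "b = w")
    case True
    then have "c = a" using b g_def by simp
    then show ?thesis using True labB wz by simp
  next
    case False
    then have "b \<in> V A" using b \<open>b \<noteq> z\<close> VB by auto
    then show ?thesis using b g_A labB_A by simp
  qed
next
  fix y assume y: "y \<in> Ends A"
  then have "y \<in> V A" by (rule Ends_V)
  then show "id y \<in> Ends B" "g (id y) = y" using y EndsB_A g_A by auto
qed

lemma z_end: "z \<in> Ends B \<and> g z = a"
  using z_Ends g_def by simp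

end


lemma constr_exists:
  assumes objA: "obj P A" and P3: "\<forall>p\<in>P. 3 \<le> p" and aR: "a \<in> ram A"
  shows "\<exists>B g. arrow P B A g \<and> (\<exists>z\<in>Ends B. fst g z = a)"
proof -
  have fg: "fgraph A" using objA by (rule obj_fgraph)
  then have fin: "finite (V A)" unfolding fgraph_def by blast
  have "ord A a \<ge> 3" using aR unfolding ram_def by blast
  then have "card {b \<in> V A. b \<noteq> a \<and> Ed A a b} \<noteq> 0" unfolding ord_def by simp
  then obtain a1 where a1: "a1 \<in> V A" "a1 \<noteq> a" "Ed A a a1"
    by (metis (mono_tags, lifting) card.empty empty_Collect_eq)
  define w where "w = Suc (Max (V A))"
  define z where "z = Suc (Suc (Max (V A)))"
  have wV: "w \<notin> V A" unfolding w_def using Max_ge[OF fin] by (metis Suc_n_not_le_n)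
  have zV: "z \<notin> V A" unfolding z_def using Max_ge[OF fin] by (metis Suc_n_not_le_n le_Suc_eq)
  have wz: "w \<noteq> z" unfolding w_def z_def by simp
  interpret c: constr P A a a1 w z
    by (unfold_locales) (use objA P3 aR a1 wV zV wz in auto)
  have "arrow P c.B A (c.g, id)" by (rule c.arrowB)
  moreover have "z \<in> Ends c.B" "fst (c.g, id) z = a" using c.z_end by auto
  ultimately show ?thesis by blast
qed

lemma fs_ext: "fraisse_seq P F f \<Longrightarrow> arrow P y (F n) g \<Longrightarrow>
  \<exists>m\<ge>n. \<exists>h. arrow P (F m) y h \<and> arr_eq (F m) (F n) (comp_arr g h) (f m n)"
  unfolding fraisse_seq_def by (elim conjE) (erule allE[of _ n], erule allE[of _ y], erule allE[of _ g], erule mp)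

lemma end_above:
  assumes fs: "fraisse_seq P F f" and P3: "\<forall>p\<in>P. 3 \<le> p" and a: "a \<in> V (F n)"
  shows "\<exists>m\<ge>n. \<exists>y\<in>Ends (F m). fst (f m n) y = a"
proof -
  have "a \<in> Ends (F n) \<or> a \<in> ram (F n)" using fs_obj[OF fs] a unfolding obj_def by blast
  then show ?thesis
  proof
    assume "a \<in> Ends (F n)"
    then show ?thesis using fs_id_fst[OF fs a] by blast
  next
    assume aR: "a \<in> ram (F n)"
    obtain B g z where g: "arrow P B (F n) g" and z: "z \<in> Ends B" and gz: "fst g z = a"
      using constr_exists[OF fs_obj[OF fs] P3 aR] by blast
    obtain m h where m: "m \<ge> n" and h: "arrow P (F m) B h"
      and eq: "arr_eq (F m) (F n) (comp_arr g h) (f m n)"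
      using fs_ext[OF fs g] by blast
    define y where "y = snd h z"
    have y: "y \<in> Ends (F m)" "fst h y = z" using arrow_snd_Ends[OF h z] unfolding y_def by auto
    then have "y \<in> V (F m)" using Ends_V by blast
    then have "fst (f m n) y = fst g (fst h y)" using eq unfolding arr_eq_def comp_arr_def by simp
    then have "fst (f m n) y = a" using y gz by simp
    then show ?thesis using m y by blast
  qed
qed


lemma limE_point:
  assumes fs: "fraisse_seq P F f" and y: "y \<in> Ends (F m)"
  defines "e \<equiv> (\<lambda>k. if m \<le> k then snd (f k m) y else fst (f m k) y)"
  shows "e \<in> limE F f" "e m = y"
proof -
  have yV: "y \<in> V (F m)" using y by (rule Ends_V)
  have eV: "e k \<in> V (F k)" for k
  proof (cases "m \<le> k")
    case True
    then show ?thesis unfolding e_def using arrow_snd_Ends[OF fs_arrow[OF fs True] y] Ends_V by auto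
  next
    case False
    then show ?thesis unfolding e_def using arrow_fst_V[OF fs_arrow[OF fs] yV] by simp
  qed
  have comp: "fst (f k j) (e k) = e j" if jk: "j \<le> k" for j k
  proof (cases "m \<le> j")
    case True
    then have mk: "m \<le> k" using jk by simp
    have s1: "snd (f k j) (snd (f j m) y) = snd (f k m) y" using fs_comp_snd[OF fs True jk y] .
    have s2: "snd (f j m) y \<in> Ends (F j)" using arrow_snd_Ends[OF fs_arrow[OF fs True] y] by blast
    have "fst (f k j) (snd (f k j) (snd (f j m) y)) = snd (f j m) y"
      using arrow_snd_Ends[OF fs_arrow[OF fs jk] s2] by blast
    then show ?thesis unfolding e_def using True mk s1 by simp
  next
    case False
    note jm = False
    show ?thesis
    proof (cases "m \<le> k")
      case True
      have u: "snd (f k m) y \<in> V (F k)" using arrow_snd_Ends[OF fs_arrow[OF fs True] y] Ends_V by blast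
      have "fst (f m j) (fst (f k m) (snd (f k m) y)) = fst (f k j) (snd (f k m) y)"
        using fs_comp_fst[OF fs _ True u, of j] jm by simp
      moreover have "fst (f k m) (snd (f k m) y) = y" using arrow_snd_Ends[OF fs_arrow[OF fs True] y] by blast
      ultimately show ?thesis unfolding e_def using True jm by simp
    next
      case False
      have "fst (f k j) (fst (f m k) y) = fst (f m j) y"
        using fs_comp_fst[OF fs jk _ yV] False by simp
      then show ?thesis unfolding e_def using False jm by simp
    qed
  qed
  have "e \<in> limF F f" unfolding limF_def using eV comp by blast
  moreover have "\<forall>k\<ge>m. e k = snd (f k m) y" unfolding e_def by simp
  ultimately show "e \<in> limE F f" unfolding limE_def using y by blast
  show "e m = y" unfolding e_def using fs_id_snd[OF fs y] by simp
qed

lemma dense: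
  assumes fs: "fraisse_seq P F f" and P3: "\<forall>p\<in>P. 3 \<le> p"
  shows "(limT F f) closure_of (limE F f) = limF F f"
proof
  show "limT F f closure_of limE F f \<subseteq> limF F f"
    using closure_of_subset_topspace topspace_limT by metis
  show "limF F f \<subseteq> limT F f closure_of limE F f"
  proof
    fix x assume xF: "x \<in> limF F f"
    show "x \<in> limT F f closure_of limE F f"
      unfolding in_closure_of
    proof (intro conjI allI impI)
      show "x \<in> topspace (limT F f)" using xF topspace_limT by simp
      fix U assume "x \<in> U \<and> openin (limT F f) U"
      then have xU: "x \<in> U" and oU: "openin (limT F f) U" by auto
      obtain U' where U': "openin (product_topology (\<lambda>i. discrete_topology (V (F i))) UNIV) U'"
        "U = U' \<inter> limF F f"
        using oU unfolding limT_def openin_subtopology by blast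
      have "x \<in> U'" using xU U'(2) by blast
      then obtain W where W: "finite {i \<in> UNIV. W i \<noteq> topspace (discrete_topology (V (F i)))}"
        "\<forall>i\<in>UNIV. openin (discrete_topology (V (F i))) (W i)"
        "x \<in> Pi\<^sub>E UNIV W" "Pi\<^sub>E UNIV W \<subseteq> U'"
        using U'(1) unfolding openin_product_topology_alt by blast
      define J where "J = {i \<in> UNIV. W i \<noteq> topspace (discrete_topology (V (F i)))}"
      have "finite J" using W(1) unfolding J_def .
      then obtain n where n: "\<forall>i\<in>J. i \<le> n" using finite_nat_set_iff_bounded_le by blast
      obtain m y where m: "m \<ge> n" and y: "y \<in> Ends (F m)" and fy: "fst (f m n) y = x n"
        using end_above[OF fs P3 limF_V[OF xF]] by blast
      define e where "e = (\<lambda>k. if m \<le> k then snd (f k m) y else fst (f m k) y)"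
      have eE: "e \<in> limE F f" and em: "e m = y" using limE_point[OF fs y] unfolding e_def by auto
      have eF: "e \<in> limF F f" using eE unfolding limE_def by blast
      have "e n = fst (f m n) (e m)" using limF_down[OF eF m] by simp
      then have en: "e n = x n" using em fy by simp
      have "e \<in> Pi\<^sub>E UNIV W"
      proof (simp add: PiE_iff, intro allI)
        fix i
        show "e i \<in> W i"
        proof (cases "i \<in> J")
          case True
          then have "i \<le> n" using n by blast
          then have "e i = x i" using limF_eq_below[OF eF xF _ en] by blast
          moreover have "x i \<in> W i" using W(3) by (simp add: PiE_iff)
          ultimately show ?thesis by simp
        next
          case False
          then have "W i = V (F i)" unfolding J_def by simp
          then show ?thesis using limF_V[OF eF] by simp
        qed
      qed
      then have "e \<in> U" using W(4) U'(2) eF by blast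
      then show "\<exists>y. y \<in> limE F f \<and> y \<in> U" using eE by blast
    qed
  qed
qed

theorem mainTheorem14:
  fixes P :: "enat set" and F :: "nat \<Rightarrow> tobj" and f :: "nat \<Rightarrow> nat \<Rightarrow> arr"
  assumes "\<forall>p\<in>P. 3 \<le> p"
    and "fraisse_seq P F f"
  shows "limE F f \<subseteq> {x. tg_endpoint TYPE('h) (limT F f) (limEd F) x}
         \<and> (limT F f) closure_of (limE F f) = limF F f"
  using part1[OF assms(2)] dense[OF assms(2,1)] by blast

end
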